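(* Let $\mathcal Q=\mathbb R^n$, $\alpha,\beta,\gamma\in[0,1]$, and let $g_s$ be a one-parameter group of transformations acting as in the context. Assume $\tilde L^{\mathcal E}_d$ is invariant: $\tilde L^{\mathcal E}_d(\tilde\Phi_{g_s}(y_k),\tilde\Phi_{g_s}(y_{k+1}),\tilde U_k^{(1)},\tilde U_k^{(2)},h)=\tilde L^{\mathcal E}_d(y_k,y_{k+1},U_k^{(1)},U_k^{(2)},h)$ for all $s$ and all arguments, where $\tilde U_k^{(1)}=\Psi_{g_s}(\bar q_k^\beta)U_k^{(1)}$ and $\tilde U_k^{(2)}=\Psi_{g_s}(\bar q_k^{1-\beta})U_k^{(2)}$. Let $\xi(y)=\frac{d}{ds}\big|_{s=0}\tilde\Phi_{g_s}(y)$ and $I_d(y,p_y)=p_y^\top\xi(y)$. Then along every solution $(y_d,U_d^{(1)},U_d^{(2)})$ of the discrete Euler–Lagrange equations $D_2\tilde L^{\mathcal E}_{d,k-1}+D_1\tilde L^{\mathcal E}_{d,k}=0$ ($k=1,\dots,N-1$) and minimisation conditions $D_{U^{(1)}}\tilde L^{\mathcal E}_{d,k}=D_{U^{(2)}}\tilde L^{\mathcal E}_{d,k}=0$ ($k=0,\dots,N-1$), one has $I_d(y_k,p^-_{y,k})=I_d(y_{k+1},p^+_{y,k+1})$ for all $k$; hence $I_d(y_k,p_{y,k})$, $p_{y,k}=p^-_{y,k}=p^+_{y,k}$, is conserved.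
   Context: Setting: $\mathcal Q=\mathbb R^n$, $y=(q,\lambda)\in T^*\mathcal Q$, controls in $\mathbb R^m$; smooth $f(q,v)$, $\rho(q)\in\mathbb R^{n\times m}$, $\mathrm g(q)$ symmetric positive definite. $\tilde L^{\mathcal E}(q,\lambda,v,v_\lambda,u)=v_\lambda^\top v+\lambda^\top(f(q,v)+\rho(q)u)-\frac12u^\top\mathrm g(q)u$. Notation: $\bar y_k^\gamma=\gamma y_k+(1-\gamma)y_{k+1}$ (similarly $\bar q_k^\gamma$), $\Delta y_k=(y_{k+1}-y_k)/h$. Approximate discrete Lagrangian: $\tilde L^{\mathcal E}_d(y_k,y_{k+1},U^{(1)},U^{(2)},h)=h[\alpha\tilde L^{\mathcal E}(\bar y_k^\gamma,\Delta y_k,U^{(1)})+(1-\alpha)\tilde L^{\mathcal E}(\bar y_k^{1-\gamma},\Delta y_k,U^{(2)})]$, with $U^{(1)},U^{(2)}$ regarded as control values attached to the points $\bar q_k^\beta$, $\bar q_k^{1-\beta}$; $\tilde L^{\mathcal E}_{d,k}$ denotes its value on the $k$-th interval. Discrete momenta: $p^-_{y,k}=-D_1\tilde L^{\mathcal E}_d(y_k,y_{k+1},U_k^{(1)},U_k^{(2)},h)$, $p^+_{y,k+1}=D_2\tilde L^{\mathcal E}_d(y_k,y_{k+1},U_k^{(1)},U_k^{(2)},h)$. Group actions: a Lie group $\mathcal G$ acts on $\mathcal Q$ by $\Phi_g$; cotangent lift $\tilde\Phi_g(q,\lambda)=(\Phi_g(q),(D\Phi_{g^{-1}}(\Phi_g(q)))^\top\lambda)$;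 the action on controls is given by linear maps $\Psi_g(q)$ with $\rho(\Phi_g(q))\Psi_g(q)u=D\Phi_g(q)\rho(q)u$. A one-parameter group of transformations is a smooth additive subgroup $s\mapsto g_s$ with $g_0=e$. *)

theory Defs
  imports "HOL-Analysis.Analysis"
begin

fun iter_deriv :: "'a::real_normed_vector list \<Rightarrow> ('a \<Rightarrow> 'b::real_normed_vector) \<Rightarrow> ('a \<Rightarrow> 'b)" where
  "iter_deriv [] F = F"
| "iter_deriv (v # vs) F = (\<lambda>x. frechet_derivative (iter_deriv vs F) (at x) v)"

definition smooth_map :: "('a::real_normed_vector \<Rightarrow> 'b::real_normed_vector) \<Rightarrow> bool" where
  "smooth_map F \<longleftrightarrow> (\<forall>vs x. iter_deriv vs F differentiable (at x))"

text \<open>Points y = (q, lambda) of the cotangent bundle of R^n.\<close>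
type_synonym 'n cot = "(real^'n) \<times> (real^'n)"

definition LE ::
  "((real^'n) \<times> (real^'n) \<Rightarrow> real^'n) \<Rightarrow> (real^'n \<Rightarrow> real^'m^'n) \<Rightarrow> (real^'n \<Rightarrow> real^'m^'m)
   \<Rightarrow> 'n cot \<Rightarrow> 'n cot \<Rightarrow> real^'m \<Rightarrow> real" where
  "LE f rho g y w u =
     snd w \<bullet> fst w + snd y \<bullet> (f (fst y, fst w) + rho (fst y) *v u) - 1/2 * (u \<bullet> (g (fst y) *v u))"

definition ybar :: "real \<Rightarrow> 'a::real_vector \<Rightarrow> 'a \<Rightarrow> 'a" where
  "ybar c a b = c *\<^sub>R a + (1 - c) *\<^sub>R b"

definition Delta :: "real \<Rightarrow> 'a::real_vector \<Rightarrow> 'a \<Rightarrow> 'a" where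
  "Delta h a b = (1 / h) *\<^sub>R (b - a)"

definition Ld ::
  "((real^'n) \<times> (real^'n) \<Rightarrow> real^'n) \<Rightarrow> (real^'n \<Rightarrow> real^'m^'n) \<Rightarrow> (real^'n \<Rightarrow> real^'m^'m)
   \<Rightarrow> real \<Rightarrow> real \<Rightarrow> 'n cot \<Rightarrow> 'n cot \<Rightarrow> real^'m \<Rightarrow> real^'m \<Rightarrow> real \<Rightarrow> real" where
  "Ld f rho g \<alpha> \<gamma> y0 y1 U1 U2 h =
     h * (\<alpha> * LE f rho g (ybar \<gamma> y0 y1) (Delta h y0 y1) U1
          + (1 - \<alpha>) * LE f rho g (ybar (1 - \<gamma>) y0 y1) (Delta h y0 y1) U2)"

text \<open>Cotangent lift of the one-parameter group  phi s = Phi_{g_s}  (so Phi_{g_s^{-1}} = phi (-s)):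
  (q, lambda) |-> (phi s q, (D phi(-s) (phi s q))' lambda).\<close>
definition cot_lift :: "(real \<Rightarrow> real^'n \<Rightarrow> real^'n) \<Rightarrow> real \<Rightarrow> 'n cot \<Rightarrow> 'n cot" where
  "cot_lift phi s y =
     (phi s (fst y),
      transpose (matrix (frechet_derivative (phi (- s)) (at (phi s (fst y))))) *v snd y)"

definition xi_gen :: "(real \<Rightarrow> real^'n \<Rightarrow> real^'n) \<Rightarrow> 'n cot \<Rightarrow> 'n cot" where
  "xi_gen phi y = vector_derivative (\<lambda>s. cot_lift phi s y) (at 0)"

text \<open>Discrete momenta (covectors, i.e. linear functionals on the tangent space of T*Q).\<close>
definition pminus ::
  "((real^'n) \<times> (real^'n) \<Rightarrow> real^'n) \<Rightarrow> (real^'n \<Rightarrow> real^'m^'n) \<Rightarrow> (real^'n \<Rightarrow> real^'m^'m)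
   \<Rightarrow> real \<Rightarrow> real \<Rightarrow> 'n cot \<Rightarrow> 'n cot \<Rightarrow> real^'m \<Rightarrow> real^'m \<Rightarrow> real \<Rightarrow> ('n cot \<Rightarrow> real)" where
  "pminus f rho g \<alpha> \<gamma> y0 y1 U1 U2 h =
     (\<lambda>v. - frechet_derivative (\<lambda>y. Ld f rho g \<alpha> \<gamma> y y1 U1 U2 h) (at y0) v)"

definition pplus ::
  "((real^'n) \<times> (real^'n) \<Rightarrow> real^'n) \<Rightarrow> (real^'n \<Rightarrow> real^'m^'n) \<Rightarrow> (real^'n \<Rightarrow> real^'m^'m)
   \<Rightarrow> real \<Rightarrow> real \<Rightarrow> 'n cot \<Rightarrow> 'n cot \<Rightarrow> real^'m \<Rightarrow> real^'m \<Rightarrow> real \<Rightarrow> ('n cot \<Rightarrow> real)" where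
  "pplus f rho g \<alpha> \<gamma> y0 y1 U1 U2 h =
     frechet_derivative (\<lambda>y. Ld f rho g \<alpha> \<gamma> y0 y U1 U2 h) (at y1)"

definition Id_noether :: "(real \<Rightarrow> real^'n \<Rightarrow> real^'n) \<Rightarrow> 'n cot \<Rightarrow> ('n cot \<Rightarrow> real) \<Rightarrow> real" where
  "Id_noether phi y p = p (xi_gen phi y)"

end

theory Submission
  imports Defs begin

lemma smooth_diff: "smooth_map F \<Longrightarrow> F differentiable at x"
proof -
  assume "smooth_map F"
  then have "iter_deriv [] F differentiable at x" unfolding smooth_map_def by blast
  then show ?thesis by simp
qed

lemma smooth_deriv_diff: "smooth_map F \<Longrightarrow> (\<lambda>x. frechet_derivative F (at x) v) differentiable at x"
proof -
  assume "smooth_map F"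
  then have "iter_deriv [v] F differentiable at x" unfolding smooth_map_def by blast
  then show ?thesis by simp
qed

lemma comp_diff:
  fixes F :: "'a::real_normed_vector \<Rightarrow> 'b::real_normed_vector^'n"
  assumes "F differentiable at x" shows "(\<lambda>x. F x $ i) differentiable at x"
proof -
  obtain D where "(F has_derivative D) (at x)" using assms differentiable_def by blast
  from bounded_linear.has_derivative[OF bounded_linear_vec_nth this, of i]
  show ?thesis unfolding differentiable_def by blast
qed

lemma vec_diff:
  fixes F :: "'a::real_normed_vector \<Rightarrow> real^'n"
  assumes "\<And>i. (\<lambda>x. F x $ i) differentiable at x" shows "F differentiable at x"
proof -
  have eq: "F = (\<lambda>x. \<Sum>i\<in>UNIV. F x $ i *\<^sub>R axis i 1)"
    by (rule ext, subst basis_expansion[symmetric]) (simp add: scalar_mult_eq_scaleR)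
  have "(\<lambda>x. \<Sum>i\<in>UNIV. F x $ i *\<^sub>R axis i 1) differentiable at x"
    using assms by (intro differentiable_sum differentiable_scaleR) auto
  then show ?thesis by (subst eq)
qed

lemma mv_diff:
  fixes M :: "'a::real_normed_vector \<Rightarrow> real^'m^'n" and u :: "'a \<Rightarrow> real^'m"
  assumes "M differentiable at x" "u differentiable at x"
  shows "(\<lambda>x. M x *v u x) differentiable at x"
proof (rule vec_diff)
  fix i
  have "(\<lambda>x. (M x *v u x) $ i) = (\<lambda>x. \<Sum>j\<in>UNIV. M x $ i $ j * u x $ j)"
    by (simp add: matrix_vector_mult_def)
  moreover have "(\<lambda>x. \<Sum>j\<in>UNIV. M x $ i $ j * u x $ j) differentiable at x"
    using comp_diff[OF comp_diff[OF assms(1)]] comp_diff[OF assms(2)]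
    by (intro differentiable_sum differentiable_mult) auto
  ultimately show "(\<lambda>x. (M x *v u x) $ i) differentiable at x" by simp
qed

lemma bl_diff:
  assumes "bounded_linear L" "F differentiable at x" shows "(\<lambda>x. L (F x)) differentiable at x"
  using assms bounded_linear.has_derivative unfolding differentiable_def by blast

lemma fst_diff: "F differentiable at x \<Longrightarrow> (\<lambda>x. fst (F x)) differentiable at x"
  by (rule bl_diff[OF bounded_linear_fst])
lemma snd_diff: "F differentiable at x \<Longrightarrow> (\<lambda>x. snd (F x)) differentiable at x"
  by (rule bl_diff[OF bounded_linear_snd])

lemma LE_diff:
  assumes f: "\<And>z. f differentiable at z" and rho: "\<And>z. rho differentiable at z"
    and g: "\<And>z. g differentiable at z"
    and Y: "Y differentiable at x" and D: "D differentiable at x" and u: "u differentiable at x"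
  shows "(\<lambda>x. LE f rho g (Y x) (D x) (u x)) differentiable at x"
proof -
  have a: "(\<lambda>x. f (fst (Y x), fst (D x))) differentiable at x"
    by (rule differentiable_compose[OF f]) (intro differentiable_Pair fst_diff Y D)
  have b: "(\<lambda>x. rho (fst (Y x))) differentiable at x"
    by (rule differentiable_compose[OF rho]) (intro fst_diff Y)
  have c: "(\<lambda>x. g (fst (Y x))) differentiable at x"
    by (rule differentiable_compose[OF g]) (intro fst_diff Y)
  show ?thesis unfolding LE_def
    by (intro differentiable_diff differentiable_add differentiable_inner differentiable_mult
        mv_diff a b c fst_diff snd_diff Y D u differentiable_const)
qed

lemma Ld_diff:
  assumes f: "\<And>z. f differentiable at z" and rho: "\<And>z. rho differentiable at z"
    and g: "\<And>z. g differentiable at z"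
    and a: "a differentiable at x" and b: "b differentiable at x"
    and c: "c differentiable at x" and d: "d differentiable at x"
  shows "(\<lambda>x. Ld f rho g \<alpha> \<gamma> (a x) (b x) (c x) (d x) h) differentiable at x"
  unfolding Ld_def ybar_def Delta_def
  by (intro differentiable_diff differentiable_add differentiable_mult differentiable_const
      LE_diff[OF f rho g] differentiable_scaleR a b c d)

lemma partials:
  fixes F :: "'a::real_normed_vector \<times> 'b::real_normed_vector \<times> 'c::real_normed_vector \<times> 'd::real_normed_vector \<Rightarrow> real"
  assumes "F differentiable at (a,b,c,d)"
  shows "frechet_derivative F (at (a,b,c,d)) (v1,v2,v3,v4) =
     frechet_derivative (\<lambda>x. F (x,b,c,d)) (at a) v1 + frechet_derivative (\<lambda>x. F (a,x,c,d)) (at b) v2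
     + frechet_derivative (\<lambda>x. F (a,b,x,d)) (at c) v3 + frechet_derivative (\<lambda>x. F (a,b,c,x)) (at d) v4"
    and "(\<lambda>x. F (a,b,x,d)) differentiable at c" and "(\<lambda>x. F (a,b,c,x)) differentiable at d"
proof -
  define DF where "DF = frechet_derivative F (at (a,b,c,d))"
  have hF: "(F has_derivative DF) (at (a,b,c,d))" unfolding DF_def
    using assms frechet_derivative_works by blast
  have bl: "bounded_linear DF" using hF has_derivative_bounded_linear by blast
  have "((\<lambda>x. (x,b,c,d)) has_derivative (\<lambda>v. (v,0,0,0))) (at a)"
    by (intro has_derivative_Pair has_derivative_ident has_derivative_const)
  from has_derivative_compose[OF this hF]
  have h1: "((\<lambda>x. F (x,b,c,d)) has_derivative (\<lambda>v. DF (v,0,0,0))) (at a)" .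
  have "((\<lambda>x. (a,x,c,d)) has_derivative (\<lambda>v. (0,v,0,0))) (at b)"
    by (intro has_derivative_Pair has_derivative_ident has_derivative_const)
  from has_derivative_compose[OF this hF]
  have h2: "((\<lambda>x. F (a,x,c,d)) has_derivative (\<lambda>v. DF (0,v,0,0))) (at b)" .
  have "((\<lambda>x. (a,b,x,d)) has_derivative (\<lambda>v. (0,0,v,0))) (at c)"
    by (intro has_derivative_Pair has_derivative_ident has_derivative_const)
  from has_derivative_compose[OF this hF]
  have h3: "((\<lambda>x. F (a,b,x,d)) has_derivative (\<lambda>v. DF (0,0,v,0))) (at c)" .
  have "((\<lambda>x. (a,b,c,x)) has_derivative (\<lambda>v. (0,0,0,v))) (at d)"
    by (intro has_derivative_Pair has_derivative_ident has_derivative_const)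
  from has_derivative_compose[OF this hF]
  have h4: "((\<lambda>x. F (a,b,c,x)) has_derivative (\<lambda>v. DF (0,0,0,v))) (at d)" .
  show "(\<lambda>x. F (a,b,x,d)) differentiable at c" using h3 differentiable_def by blast
  show "(\<lambda>x. F (a,b,c,x)) differentiable at d" using h4 differentiable_def by blast
  have lin: "linear DF" using bl bounded_linear.linear by blast
  have "DF (v1,v2,v3,v4) = DF ((v1,0,0,0) + ((0,v2,0,0) + ((0,0,v3,0) + (0,0,0,v4))))" by simp
  also have "\<dots> = DF (v1,0,0,0) + (DF (0,v2,0,0) + (DF (0,0,v3,0) + DF (0,0,0,v4)))"
    by (simp only: linear_add[OF lin])
  finally have "DF (v1,v2,v3,v4) = DF (v1,0,0,0) + DF (0,v2,0,0) + DF (0,0,v3,0) + DF (0,0,0,v4)"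
    by (simp add: add.assoc)
  then show "frechet_derivative F (at (a,b,c,d)) (v1,v2,v3,v4) =
     frechet_derivative (\<lambda>x. F (x,b,c,d)) (at a) v1 + frechet_derivative (\<lambda>x. F (a,x,c,d)) (at b) v2
     + frechet_derivative (\<lambda>x. F (a,b,x,d)) (at c) v3 + frechet_derivative (\<lambda>x. F (a,b,c,x)) (at d) v4"
    unfolding DF_def[symmetric]
    by (simp add: frechet_derivative_at[OF h1, symmetric] frechet_derivative_at[OF h2, symmetric]
        frechet_derivative_at[OF h3, symmetric] frechet_derivative_at[OF h4, symmetric])
qed

lemma phi_partial:
  fixes phi :: "real \<Rightarrow> 'a::real_normed_vector \<Rightarrow> 'b::real_normed_vector"
  assumes "(\<lambda>z. phi (fst z) (snd z)) differentiable at (t,x)"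
  shows "frechet_derivative (phi t) (at x) v = frechet_derivative (\<lambda>z. phi (fst z) (snd z)) (at (t,x)) (0,v)"
proof -
  have hF: "((\<lambda>z. phi (fst z) (snd z)) has_derivative frechet_derivative (\<lambda>z. phi (fst z) (snd z)) (at (t,x))) (at (t,x))"
    using assms frechet_derivative_works by blast
  have "((\<lambda>x. (t,x)) has_derivative (\<lambda>v. (0,v))) (at x)"
    by (intro has_derivative_Pair has_derivative_ident has_derivative_const)
  from has_derivative_compose[OF this hF]
  have "(phi t has_derivative (\<lambda>v. frechet_derivative (\<lambda>z. phi (fst z) (snd z)) (at (t,x)) (0,v))) (at x)"
    by simp
  from fun_cong[OF frechet_derivative_at[OF this], of v] show ?thesis by simp
qed

lemma cot_lift_diff:
  fixes phi :: "real \<Rightarrow> real^'n \<Rightarrow> real^'n"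
  assumes sm: "smooth_map (\<lambda>z::real \<times> (real^'n). phi (fst z) (snd z))"
  shows "(\<lambda>s. cot_lift phi s y) differentiable at s0"
proof -
  define P where "P = (\<lambda>z::real \<times> (real^'n). phi (fst z) (snd z))"
  have Pd: "\<And>z. P differentiable at z" using smooth_diff[OF sm] unfolding P_def .
  have c1: "(\<lambda>s. phi s (fst y)) differentiable at s0"
  proof -
    have "(\<lambda>s. P (s, fst y)) differentiable at s0"
      by (rule differentiable_compose[OF Pd]) (intro differentiable_Pair differentiable_ident differentiable_const)
    then show ?thesis by (simp add: P_def)
  qed
  have c2: "(\<lambda>s. transpose (matrix (frechet_derivative (phi (- s)) (at (phi s (fst y))))) *v snd y)
      differentiable at s0"
  proof (rule vec_diff)
    fix i
    have eq: "(\<lambda>s. (transpose (matrix (frechet_derivative (phi (- s)) (at (phi s (fst y))))) *v snd y) $ i)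
      = (\<lambda>s. \<Sum>j\<in>UNIV. (frechet_derivative P (at (- s, P (s, fst y))) (0, axis i 1)) $ j * snd y $ j)"
      by (rule ext) (simp add: matrix_vector_mult_def transpose_def matrix_def
          phi_partial[OF Pd[unfolded P_def]] P_def)
    have "(\<lambda>s. P (s, fst y)) differentiable at s0"
      by (rule differentiable_compose[OF Pd]) (intro differentiable_Pair differentiable_ident differentiable_const)
    then have "(\<lambda>s. (- s, P (s, fst y))) differentiable at s0"
      by (intro differentiable_Pair differentiable_minus differentiable_ident)
    then have hD: "(\<lambda>s. frechet_derivative P (at (- s, P (s, fst y))) (0, axis i 1)) differentiable at s0"
      by (rule differentiable_compose[OF smooth_deriv_diff[OF sm[folded P_def]]])
    then have "(\<lambda>s. \<Sum>j\<in>UNIV. (frechet_derivative P (at (- s, P (s, fst y))) (0, axis i 1)) $ j * snd y $ j)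
        differentiable at s0"
      by (intro differentiable_sum ballI differentiable_mult comp_diff[OF hD] differentiable_const) simp
    then show "(\<lambda>s. (transpose (matrix (frechet_derivative (phi (- s)) (at (phi s (fst y))))) *v snd y) $ i)
        differentiable at s0" by (simp only: eq)
  qed
  show ?thesis unfolding cot_lift_def by (intro differentiable_Pair c1 c2)
qed

lemma cot_lift_zero:
  assumes "\<And>q. phi 0 q = q" shows "cot_lift phi 0 y = y"
proof -
  have "phi 0 = id" using assms by (simp add: fun_eq_iff)
  then show ?thesis
    by (simp add: cot_lift_def frechet_derivative_id matrix_id_mat_1 transpose_mat assms)
qed

lemma Psi_curve_diff:
  fixes Psi :: "real \<Rightarrow> real^'n \<Rightarrow> real^'m^'m"
  assumes sm: "smooth_map (\<lambda>z::real \<times> (real^'n). Psi (fst z) (snd z))"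
  shows "(\<lambda>s. Psi s q *v V) differentiable at s0"
proof -
  have "(\<lambda>s. (\<lambda>z::real \<times> (real^'n). Psi (fst z) (snd z)) (s, q)) differentiable at s0"
    by (rule differentiable_compose[OF smooth_diff[OF sm]])
      (intro differentiable_Pair differentiable_ident differentiable_const)
  then show ?thesis by (intro mv_diff differentiable_const) simp
qed

lemma mv_neg: "(M::real^'m^'n) *v (- V) = - (M *v V)"
  using linear_neg[OF matrix_vector_mul_linear] .

lemma LE_quad:
  "LE f rho g Y D V + LE f rho g Y D (-V) - 2 * LE f rho g Y D 0 = - (V \<bullet> (g (fst Y) *v V))"
  by (simp add: LE_def mv_neg inner_add_right inner_minus_right algebra_simps)

lemma surj_lemma:
  fixes P G :: "real^'m^'m" and A :: "real^'m \<Rightarrow> real"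
  assumes inv: "\<And>V. A (P *v V) = A V"
    and quad: "\<And>V. A V + A (-V) - 2 * A 0 = c * (V \<bullet> (G *v V))"
    and c: "c \<noteq> 0" and pd: "\<And>u. u \<noteq> 0 \<Longrightarrow> u \<bullet> (G *v u) > 0"
  shows "\<exists>V. P *v V = U"
proof -
  have lin: "linear ((*v) P)" by (simp add: bounded_linear.linear)
  have "inj ((*v) P)"
    unfolding linear_injective_0[OF lin]
  proof (intro allI impI)
    fix V assume V: "P *v V = 0"
    have "A V = A 0" using inv[of V] V by simp
    moreover have "A (-V) = A 0" using inv[of "-V"] V by (simp add: mv_neg)
    ultimately have "c * (V \<bullet> (G *v V)) = 0" using quad[of V] by simp
    then have "V \<bullet> (G *v V) = 0" using c by simp
    then show "V = 0" using pd[of V] by (cases "V = 0") auto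
  qed
  then have "surj ((*v) P)" using eucl.linear_injective_imp_surjective lin by blast
  from surjD[OF this, of U] obtain V where "U = P *v V" by blast
  then show ?thesis by auto
qed

lemma noether_step:
  fixes f :: "(real^'n) \<times> (real^'n) \<Rightarrow> real^'n"
    and rho :: "real^'n \<Rightarrow> real^'m^'n"
    and g :: "real^'n \<Rightarrow> real^'m^'m"
    and phi :: "real \<Rightarrow> real^'n \<Rightarrow> real^'n"
    and Psi :: "real \<Rightarrow> real^'n \<Rightarrow> real^'m^'m"
    and \<alpha> \<beta> \<gamma> h :: real
    and y0 y1 :: "'n cot"
    and U1 U2 :: "real^'m"
  assumes fd: "\<And>z. f differentiable at z" and rd: "\<And>z. rho differentiable at z"
    and gd: "\<And>z. g differentiable at z"
    and g_posdef: "\<And>q u. u \<noteq> 0 \<Longrightarrow> u \<bullet> (g q *v u) > 0"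
    and phi_smooth: "smooth_map (\<lambda>z::real \<times> (real^'n). phi (fst z) (snd z))"
    and phi_zero: "\<And>q. phi 0 q = q"
    and Psi_smooth: "smooth_map (\<lambda>z::real \<times> (real^'n). Psi (fst z) (snd z))"
    and invariant: "\<And>s y0 y1 V1 V2 k.
          Ld f rho g \<alpha> \<gamma> (cot_lift phi s y0) (cot_lift phi s y1)
             (Psi s (ybar \<beta> (fst y0) (fst y1)) *v V1)
             (Psi s (ybar (1 - \<beta>) (fst y0) (fst y1)) *v V2) k
          = Ld f rho g \<alpha> \<gamma> y0 y1 V1 V2 k"
    and m1: "frechet_derivative (\<lambda>W. Ld f rho g \<alpha> \<gamma> y0 y1 W U2 h) (at U1) = (\<lambda>v. 0)"
    and m2: "frechet_derivative (\<lambda>W. Ld f rho g \<alpha> \<gamma> y0 y1 U1 W h) (at U2) = (\<lambda>v. 0)"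
  shows "Id_noether phi y0 (pminus f rho g \<alpha> \<gamma> y0 y1 U1 U2 h)
       = Id_noether phi y1 (pplus f rho g \<alpha> \<gamma> y0 y1 U1 U2 h)"
proof -
  define LA where "LA z0 z1 W = h * \<alpha> * LE f rho g (ybar \<gamma> z0 z1) (Delta h z0 z1) W" for z0 z1 W
  define LB where "LB z0 z1 W = h * (1 - \<alpha>) * LE f rho g (ybar (1 - \<gamma>) z0 z1) (Delta h z0 z1) W" for z0 z1 W
  have split: "\<And>z0 z1 W1 W2. Ld f rho g \<alpha> \<gamma> z0 z1 W1 W2 h = LA z0 z1 W1 + LB z0 z1 W2"
    by (simp add: Ld_def LA_def LB_def algebra_simps)
  define q1 where "q1 = ybar \<beta> (fst y0) (fst y1)"
  define q2 where "q2 = ybar (1 - \<beta>) (fst y0) (fst y1)"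
  define P1 where "P1 = Psi 0 q1"
  define P2 where "P2 = Psi 0 q2"
  have inv0: "\<And>V1 V2. Ld f rho g \<alpha> \<gamma> y0 y1 (P1 *v V1) (P2 *v V2) h = Ld f rho g \<alpha> \<gamma> y0 y1 V1 V2 h"
    using invariant[of 0 y0 y1] by (simp add: cot_lift_zero[of phi, OF phi_zero] P1_def P2_def q1_def q2_def)
  have invA: "\<And>V. LA y0 y1 (P1 *v V) = LA y0 y1 V" using inv0[of _ 0] by (simp add: split)
  have invB: "\<And>V. LB y0 y1 (P2 *v V) = LB y0 y1 V" using inv0[of 0] by (simp add: split)
  obtain V1 where V1: "h * \<alpha> = 0 \<or> P1 *v V1 = U1"
  proof (cases "h * \<alpha> = 0")
    case True then show ?thesis using that by blast
  next
    case False
    have "\<exists>V. P1 *v V = U1"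
    proof (rule surj_lemma[where A="LA y0 y1" and P=P1 and c="- (h * \<alpha>)" and G="g (fst (ybar \<gamma> y0 y1))", OF invA _ _ g_posdef])
      fix V
      have "LA y0 y1 V + LA y0 y1 (- V) - 2 * LA y0 y1 0 = (h * \<alpha>) *
          (LE f rho g (ybar \<gamma> y0 y1) (Delta h y0 y1) V + LE f rho g (ybar \<gamma> y0 y1) (Delta h y0 y1) (- V)
           - 2 * LE f rho g (ybar \<gamma> y0 y1) (Delta h y0 y1) 0)"
        unfolding LA_def by (simp add: algebra_simps)
      also have "\<dots> = (- (h * \<alpha>)) * (V \<bullet> (g (fst (ybar \<gamma> y0 y1)) *v V))"
        by (simp only: LE_quad) simp
      finally show "LA y0 y1 V + LA y0 y1 (- V) - 2 * LA y0 y1 0 =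
          (- (h * \<alpha>)) * (V \<bullet> (g (fst (ybar \<gamma> y0 y1)) *v V))" .
    next
      show "- (h * \<alpha>) \<noteq> 0" using False by simp
    qed
    then show ?thesis using that by blast
  qed
  obtain V2 where V2: "h * (1 - \<alpha>) = 0 \<or> P2 *v V2 = U2"
  proof (cases "h * (1 - \<alpha>) = 0")
    case True then show ?thesis using that by blast
  next
    case False
    have "\<exists>V. P2 *v V = U2"
    proof (rule surj_lemma[where A="LB y0 y1" and P=P2 and c="- (h * (1 - \<alpha>))" and G="g (fst (ybar (1 - \<gamma>) y0 y1))", OF invB _ _ g_posdef])
      fix V
      have "LB y0 y1 V + LB y0 y1 (- V) - 2 * LB y0 y1 0 = (h * (1 - \<alpha>)) *
          (LE f rho g (ybar (1 - \<gamma>) y0 y1) (Delta h y0 y1) V + LE f rho g (ybar (1 - \<gamma>) y0 y1) (Delta h y0 y1) (- V)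
           - 2 * LE f rho g (ybar (1 - \<gamma>) y0 y1) (Delta h y0 y1) 0)"
        unfolding LB_def by (simp add: algebra_simps)
      also have "\<dots> = (- (h * (1 - \<alpha>))) * (V \<bullet> (g (fst (ybar (1 - \<gamma>) y0 y1)) *v V))"
        by (simp only: LE_quad) simp
      finally show "LB y0 y1 V + LB y0 y1 (- V) - 2 * LB y0 y1 0 =
          (- (h * (1 - \<alpha>))) * (V \<bullet> (g (fst (ybar (1 - \<gamma>) y0 y1)) *v V))" .
    next
      show "- (h * (1 - \<alpha>)) \<noteq> 0" using False by simp
    qed
    then show ?thesis using that by blast
  qed
  define W1 where "W1 = P1 *v V1"
  define W2 where "W2 = P2 *v V2"
  have LAeq: "\<And>z0 z1. LA z0 z1 W1 = LA z0 z1 U1" using V1 unfolding W1_def LA_def by auto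
  have LBeq: "\<And>z0 z1. LB z0 z1 W2 = LB z0 z1 U2" using V2 unfolding W2_def LB_def by auto
  have eqf1: "(\<lambda>z. Ld f rho g \<alpha> \<gamma> z y1 W1 W2 h) = (\<lambda>z. Ld f rho g \<alpha> \<gamma> z y1 U1 U2 h)"
    by (simp add: split LAeq LBeq)
  have eqf2: "(\<lambda>z. Ld f rho g \<alpha> \<gamma> y0 z W1 W2 h) = (\<lambda>z. Ld f rho g \<alpha> \<gamma> y0 z U1 U2 h)"
    by (simp add: split LAeq LBeq)
  have Ldc: "\<And>W2 x. (\<lambda>W. Ld f rho g \<alpha> \<gamma> y0 y1 W W2 h) differentiable at x"
    by (intro Ld_diff[OF fd rd gd] differentiable_const differentiable_ident)
  have Ldc2: "\<And>W1 x. (\<lambda>W. Ld f rho g \<alpha> \<gamma> y0 y1 W1 W h) differentiable at x"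
    by (intro Ld_diff[OF fd rd gd] differentiable_const differentiable_ident)
  have D3: "frechet_derivative (\<lambda>W. Ld f rho g \<alpha> \<gamma> y0 y1 W W2 h) (at W1) = (\<lambda>v. 0)"
  proof (cases "h * \<alpha> = 0")
    case True
    then have "(\<lambda>W. Ld f rho g \<alpha> \<gamma> y0 y1 W W2 h) = (\<lambda>W. LB y0 y1 W2)"
      by (auto simp add: split LA_def)
    then show ?thesis by (simp add: frechet_derivative_at[OF has_derivative_const, symmetric])
  next
    case False
    then have W1: "W1 = U1" using V1 W1_def by simp
    have "((\<lambda>W. Ld f rho g \<alpha> \<gamma> y0 y1 W U2 h) has_derivative (\<lambda>v. 0)) (at U1)"
    proof -
      have "((\<lambda>W. Ld f rho g \<alpha> \<gamma> y0 y1 W U2 h) has_derivative frechet_derivative (\<lambda>W. Ld f rho g \<alpha> \<gamma> y0 y1 W U2 h) (at U1)) (at U1)"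
        using Ldc frechet_derivative_works by blast
      then show ?thesis using m1 by simp
    qed
    then have "((\<lambda>W. Ld f rho g \<alpha> \<gamma> y0 y1 W U2 h + (LB y0 y1 W2 - LB y0 y1 U2)) has_derivative (\<lambda>v. 0 + 0)) (at U1)"
      by (intro has_derivative_add has_derivative_const)
    moreover have "(\<lambda>W. Ld f rho g \<alpha> \<gamma> y0 y1 W U2 h + (LB y0 y1 W2 - LB y0 y1 U2)) = (\<lambda>W. Ld f rho g \<alpha> \<gamma> y0 y1 W W2 h)"
      by (simp add: split)
    ultimately show ?thesis using W1 frechet_derivative_at by fastforce
  qed
  have D4: "frechet_derivative (\<lambda>W. Ld f rho g \<alpha> \<gamma> y0 y1 W1 W h) (at W2) = (\<lambda>v. 0)"
  proof (cases "h * (1 - \<alpha>) = 0")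
    case True
    then have "(\<lambda>W. Ld f rho g \<alpha> \<gamma> y0 y1 W1 W h) = (\<lambda>W. LA y0 y1 W1)"
      by (auto simp add: split LB_def)
    then show ?thesis by (simp add: frechet_derivative_at[OF has_derivative_const, symmetric])
  next
    case False
    then have W2: "W2 = U2" using V2 W2_def by simp
    have "((\<lambda>W. Ld f rho g \<alpha> \<gamma> y0 y1 U1 W h) has_derivative (\<lambda>v. 0)) (at U2)"
    proof -
      have "((\<lambda>W. Ld f rho g \<alpha> \<gamma> y0 y1 U1 W h) has_derivative frechet_derivative (\<lambda>W. Ld f rho g \<alpha> \<gamma> y0 y1 U1 W h) (at U2)) (at U2)"
        using Ldc2 frechet_derivative_works by blast
      then show ?thesis using m2 by simp
    qed
    then have "((\<lambda>W. Ld f rho g \<alpha> \<gamma> y0 y1 U1 W h + (LA y0 y1 W1 - LA y0 y1 U1)) has_derivative (\<lambda>v. 0 + 0)) (at U2)"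
      by (intro has_derivative_add has_derivative_const)
    moreover have "(\<lambda>W. Ld f rho g \<alpha> \<gamma> y0 y1 U1 W h + (LA y0 y1 W1 - LA y0 y1 U1)) = (\<lambda>W. Ld f rho g \<alpha> \<gamma> y0 y1 W1 W h)"
      by (simp add: split add.commute)
    ultimately show ?thesis using W2 frechet_derivative_at by fastforce
  qed
  define F where "F = (\<lambda>p::'n cot \<times> 'n cot \<times> (real^'m) \<times> (real^'m).
      Ld f rho g \<alpha> \<gamma> (fst p) (fst (snd p)) (fst (snd (snd p))) (snd (snd (snd p))) h)"
  have Fd: "\<And>p. F differentiable at p" unfolding F_def
    by (intro Ld_diff[OF fd rd gd] fst_diff snd_diff differentiable_ident)
  define xi0 where "xi0 = xi_gen phi y0"
  define xi1 where "xi1 = xi_gen phi y1"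
  define w1 where "w1 = vector_derivative (\<lambda>s. Psi s q1 *v V1) (at 0)"
  define w2 where "w2 = vector_derivative (\<lambda>s. Psi s q2 *v V2) (at 0)"
  have d0: "((\<lambda>s. cot_lift phi s y0) has_vector_derivative xi0) (at 0)"
    unfolding xi0_def xi_gen_def using vector_derivative_works cot_lift_diff[OF phi_smooth] by blast
  have d1: "((\<lambda>s. cot_lift phi s y1) has_vector_derivative xi1) (at 0)"
    unfolding xi1_def xi_gen_def using vector_derivative_works cot_lift_diff[OF phi_smooth] by blast
  have d2: "((\<lambda>s. Psi s q1 *v V1) has_vector_derivative w1) (at 0)"
    unfolding w1_def using vector_derivative_works Psi_curve_diff[OF Psi_smooth] by blast
  have d3: "((\<lambda>s. Psi s q2 *v V2) has_vector_derivative w2) (at 0)"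
    unfolding w2_def using vector_derivative_works Psi_curve_diff[OF Psi_smooth] by blast
  define c where "c s = (cot_lift phi s y0, cot_lift phi s y1, Psi s q1 *v V1, Psi s q2 *v V2)" for s
  have hc: "(c has_derivative (\<lambda>t. (t *\<^sub>R xi0, t *\<^sub>R xi1, t *\<^sub>R w1, t *\<^sub>R w2))) (at 0)"
    unfolding c_def using d0 d1 d2 d3 unfolding has_vector_derivative_def
    by (intro has_derivative_Pair)
  have c0: "c 0 = (y0, y1, W1, W2)"
    by (simp add: c_def cot_lift_zero[of phi, OF phi_zero] W1_def W2_def P1_def P2_def)
  define DF where "DF = frechet_derivative F (at (y0, y1, W1, W2))"
  have hF: "(F has_derivative DF) (at (c 0))" unfolding c0 DF_def
    using Fd frechet_derivative_works by blast
  have "((\<lambda>s. F (c s)) has_derivative (\<lambda>t. DF (t *\<^sub>R xi0, t *\<^sub>R xi1, t *\<^sub>R w1, t *\<^sub>R w2))) (at 0)"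
    using has_derivative_compose[OF hc hF] .
  moreover have "(\<lambda>s. F (c s)) = (\<lambda>s. Ld f rho g \<alpha> \<gamma> y0 y1 V1 V2 h)"
    by (simp add: F_def c_def invariant[of _ y0 y1, folded q1_def q2_def])
  ultimately have "((\<lambda>s. Ld f rho g \<alpha> \<gamma> y0 y1 V1 V2 h) has_derivative
      (\<lambda>t. DF (t *\<^sub>R xi0, t *\<^sub>R xi1, t *\<^sub>R w1, t *\<^sub>R w2))) (at 0)" by simp
  from has_derivative_unique[OF this has_derivative_const]
  have "(\<lambda>t. DF (t *\<^sub>R xi0, t *\<^sub>R xi1, t *\<^sub>R w1, t *\<^sub>R w2)) = (\<lambda>t. 0)" .
  from fun_cong[OF this, of 1] have "DF (xi0, xi1, w1, w2) = 0" by simp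
  then have "frechet_derivative (\<lambda>x. Ld f rho g \<alpha> \<gamma> x y1 W1 W2 h) (at y0) xi0
     + frechet_derivative (\<lambda>x. Ld f rho g \<alpha> \<gamma> y0 x W1 W2 h) (at y1) xi1
     + frechet_derivative (\<lambda>x. Ld f rho g \<alpha> \<gamma> y0 y1 x W2 h) (at W1) w1
     + frechet_derivative (\<lambda>x. Ld f rho g \<alpha> \<gamma> y0 y1 W1 x h) (at W2) w2 = 0"
    using partials(1)[OF Fd, of y0 y1 W1 W2 xi0 xi1 w1 w2] unfolding DF_def by (simp add: F_def)
  then have "frechet_derivative (\<lambda>x. Ld f rho g \<alpha> \<gamma> x y1 U1 U2 h) (at y0) xi0
     + frechet_derivative (\<lambda>x. Ld f rho g \<alpha> \<gamma> y0 x U1 U2 h) (at y1) xi1 = 0"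
    by (simp add: D3 D4 eqf1 eqf2)
  then show ?thesis
    unfolding Id_noether_def pminus_def pplus_def xi0_def[symmetric] xi1_def[symmetric] by simp
qed

theorem mainTheorem12:
  fixes f :: "(real^'n) \<times> (real^'n) \<Rightarrow> real^'n"
    and rho :: "real^'n \<Rightarrow> real^'m^'n"
    and g :: "real^'n \<Rightarrow> real^'m^'m"
    and phi :: "real \<Rightarrow> real^'n \<Rightarrow> real^'n"
    and Psi :: "real \<Rightarrow> real^'n \<Rightarrow> real^'m^'m"
    and \<alpha> \<beta> \<gamma> h :: real
    and N :: nat
    and y :: "nat \<Rightarrow> 'n cot"
    and U1 U2 :: "nat \<Rightarrow> real^'m"
  assumes f_smooth: "smooth_map f"
    and rho_smooth: "smooth_map rho"
    and g_smooth: "smooth_map g"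
    and g_sym: "\<And>q. transpose (g q) = g q"
    and g_posdef: "\<And>q u. u \<noteq> 0 \<Longrightarrow> u \<bullet> (g q *v u) > 0"
    and \<alpha>: "\<alpha> \<in> {0..1}" and \<beta>: "\<beta> \<in> {0..1}" and \<gamma>: "\<gamma> \<in> {0..1}"
    \<comment> \<open>one-parameter group of transformations s |-> Phi_{g_s}, smooth in (s,q)\<close>
    and phi_smooth: "smooth_map (\<lambda>z::real \<times> (real^'n). phi (fst z) (snd z))"
    and phi_zero: "\<And>q. phi 0 q = q"
    and phi_add: "\<And>s t q. phi (s + t) q = phi s (phi t q)"
    \<comment> \<open>action on controls\<close>
    and Psi_smooth: "smooth_map (\<lambda>z::real \<times> (real^'n). Psi (fst z) (snd z))"
    and Psi_rel: "\<And>s q u. rho (phi s q) *v (Psi s q *v u)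
                     = frechet_derivative (phi s) (at q) (rho q *v u)"
    \<comment> \<open>invariance of the approximate discrete Lagrangian\<close>
    and invariant: "\<And>s y0 y1 V1 V2 k.
          Ld f rho g \<alpha> \<gamma> (cot_lift phi s y0) (cot_lift phi s y1)
             (Psi s (ybar \<beta> (fst y0) (fst y1)) *v V1)
             (Psi s (ybar (1 - \<beta>) (fst y0) (fst y1)) *v V2) k
          = Ld f rho g \<alpha> \<gamma> y0 y1 V1 V2 k"
    \<comment> \<open>discrete Euler--Lagrange equations\<close>
    and DEL: "\<And>k. 1 \<le> k \<Longrightarrow> k < N \<Longrightarrow>
          (\<lambda>v. frechet_derivative (\<lambda>z. Ld f rho g \<alpha> \<gamma> (y (k - 1)) z (U1 (k - 1)) (U2 (k - 1)) h) (at (y k)) v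
             + frechet_derivative (\<lambda>z. Ld f rho g \<alpha> \<gamma> z (y (k + 1)) (U1 k) (U2 k) h) (at (y k)) v)
          = (\<lambda>v. 0)"
    \<comment> \<open>minimisation conditions\<close>
    and min1: "\<And>k. k < N \<Longrightarrow>
          frechet_derivative (\<lambda>W. Ld f rho g \<alpha> \<gamma> (y k) (y (k + 1)) W (U2 k) h) (at (U1 k)) = (\<lambda>v. 0)"
    and min2: "\<And>k. k < N \<Longrightarrow>
          frechet_derivative (\<lambda>W. Ld f rho g \<alpha> \<gamma> (y k) (y (k + 1)) (U1 k) W h) (at (U2 k)) = (\<lambda>v. 0)"
  shows "(\<forall>k < N.
            Id_noether phi (y k) (pminus f rho g \<alpha> \<gamma> (y k) (y (k + 1)) (U1 k) (U2 k) h)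
          = Id_noether phi (y (k + 1)) (pplus f rho g \<alpha> \<gamma> (y k) (y (k + 1)) (U1 k) (U2 k) h))
       \<and> (\<forall>k. 1 \<le> k \<and> k < N \<longrightarrow>
            pminus f rho g \<alpha> \<gamma> (y k) (y (k + 1)) (U1 k) (U2 k) h
          = pplus f rho g \<alpha> \<gamma> (y (k - 1)) (y k) (U1 (k - 1)) (U2 (k - 1)) h)
       \<and> (\<forall>k < N.
            Id_noether phi (y k) (pminus f rho g \<alpha> \<gamma> (y k) (y (k + 1)) (U1 k) (U2 k) h)
          = Id_noether phi (y 0) (pminus f rho g \<alpha> \<gamma> (y 0) (y 1) (U1 0) (U2 0) h))"
proof -
  have fd: "\<And>z. f differentiable at z" using smooth_diff[OF f_smooth] .
  have rd: "\<And>z. rho differentiable at z" using smooth_diff[OF rho_smooth] .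
  have gd: "\<And>z. g differentiable at z" using smooth_diff[OF g_smooth] .
  have P1: "\<And>k. k < N \<Longrightarrow>
            Id_noether phi (y k) (pminus f rho g \<alpha> \<gamma> (y k) (y (k + 1)) (U1 k) (U2 k) h)
          = Id_noether phi (y (k + 1)) (pplus f rho g \<alpha> \<gamma> (y k) (y (k + 1)) (U1 k) (U2 k) h)"
  proof -
    fix k assume k: "k < N"
    show "Id_noether phi (y k) (pminus f rho g \<alpha> \<gamma> (y k) (y (k + 1)) (U1 k) (U2 k) h)
          = Id_noether phi (y (k + 1)) (pplus f rho g \<alpha> \<gamma> (y k) (y (k + 1)) (U1 k) (U2 k) h)"
      by (rule noether_step[OF fd rd gd g_posdef phi_smooth phi_zero Psi_smooth invariant
            min1[OF k] min2[OF k]])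
  qed
  have P2: "\<And>k. 1 \<le> k \<Longrightarrow> k < N \<Longrightarrow>
            pminus f rho g \<alpha> \<gamma> (y k) (y (k + 1)) (U1 k) (U2 k) h
          = pplus f rho g \<alpha> \<gamma> (y (k - 1)) (y k) (U1 (k - 1)) (U2 (k - 1)) h"
  proof -
    fix k assume k: "1 \<le> k" "k < N"
    show "pminus f rho g \<alpha> \<gamma> (y k) (y (k + 1)) (U1 k) (U2 k) h
          = pplus f rho g \<alpha> \<gamma> (y (k - 1)) (y k) (U1 (k - 1)) (U2 (k - 1)) h"
      unfolding pminus_def pplus_def
    proof (rule ext)
      fix v
      from fun_cong[OF DEL[OF k], of v]
      show "- frechet_derivative (\<lambda>z. Ld f rho g \<alpha> \<gamma> z (y (k + 1)) (U1 k) (U2 k) h) (at (y k)) v =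
        frechet_derivative (\<lambda>z. Ld f rho g \<alpha> \<gamma> (y (k - 1)) z (U1 (k - 1)) (U2 (k - 1)) h) (at (y k)) v"
        by simp
    qed
  qed
  have P3: "\<And>k. k < N \<Longrightarrow>
            Id_noether phi (y k) (pminus f rho g \<alpha> \<gamma> (y k) (y (k + 1)) (U1 k) (U2 k) h)
          = Id_noether phi (y 0) (pminus f rho g \<alpha> \<gamma> (y 0) (y 1) (U1 0) (U2 0) h)"
  proof -
    fix k show "k < N \<Longrightarrow>
            Id_noether phi (y k) (pminus f rho g \<alpha> \<gamma> (y k) (y (k + 1)) (U1 k) (U2 k) h)
          = Id_noether phi (y 0) (pminus f rho g \<alpha> \<gamma> (y 0) (y 1) (U1 0) (U2 0) h)"
    proof (induction k)
      case 0 then show ?case by simp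
    next
      case (Suc k)
      then have kN: "k < N" by simp
      have "pminus f rho g \<alpha> \<gamma> (y (Suc k)) (y (Suc k + 1)) (U1 (Suc k)) (U2 (Suc k)) h
          = pplus f rho g \<alpha> \<gamma> (y k) (y (k + 1)) (U1 k) (U2 k) h"
        using P2[of "Suc k"] Suc.prems by simp
      then have "Id_noether phi (y (Suc k)) (pminus f rho g \<alpha> \<gamma> (y (Suc k)) (y (Suc k + 1)) (U1 (Suc k)) (U2 (Suc k)) h)
          = Id_noether phi (y k) (pminus f rho g \<alpha> \<gamma> (y k) (y (k + 1)) (U1 k) (U2 k) h)"
        using P1[OF kN] by simp
      then show ?case using Suc.IH[OF kN] by simp
    qed
  qed
  show ?thesis using P1 P2 P3 by blast
qed

end
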